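(* For every $j\ge0$, $$\left|\frac{\mathbb E(W_j)}{K}-\mathbb Q_j\right|\le \mathbb E\!\left(\min(pv_1,1)\,\frac{v_1}{V}\right).$$
   Context: Uniform urn model. Let $v$ be a random variable with values in the positive integers (number of balls of a given color), let $K\ge 1$, let $v_1,\dots,v_K$ be i.i.d. copies of $v$ and $V=v_1+\dots+v_K$. Fix a sampling fraction $p\in(0,1)$, with $pV$ assumed to be an integer. Conditionally on $\mathcal F=\{v_1,\dots,v_K\}$, $pV$ balls are drawn with replacement, independently, each drawn ball having color $i$ with probability $v_i/V$. Let $\tilde v_i$ be the number of drawn balls of color $i$, and for $j\ge0$ let $W_j=\sum_{i=1}^K\mathbf 1\{\tilde v_i=j\}$. Let $\mathbb Q_j=\mathbb E\big(\frac{(pv)^j}{j!}e^{-pv}\big)$, $j\ge0$. *)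

theory Defs
  imports "HOL-Probability.Probability"
begin

text \<open>Joint law of the i.i.d. copies v_1,...,v_K (indexed 0..K-1), as a function {..<K} -> nat.\<close>
definition sizes_pmf :: "nat pmf \<Rightarrow> nat \<Rightarrow> (nat \<Rightarrow> nat) pmf" where
  "sizes_pmf v K = Pi_pmf {..<K} 0 (\<lambda>_. v)"

definition total :: "nat \<Rightarrow> (nat \<Rightarrow> nat) \<Rightarrow> nat" where
  "total K vs = (\<Sum>i<K. vs i)"

definition colour_pmf :: "nat \<Rightarrow> (nat \<Rightarrow> nat) \<Rightarrow> nat pmf" where
  "colour_pmf K vs = pmf_of_multiset (\<Sum>i<K. replicate_mset (vs i) i)"

text \<open>Conditional law of the colour counts (tilde v_i) given the sizes: p V independent draws.\<close>
definition counts_pmf :: "real \<Rightarrow> nat \<Rightarrow> (nat \<Rightarrow> nat) \<Rightarrow> (nat \<Rightarrow> nat) pmf" where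
  "counts_pmf p K vs =
     map_pmf (\<lambda>xs i. count_list xs i)
       (replicate_pmf (nat \<lfloor>p * real (total K vs)\<rfloor>) (colour_pmf K vs))"

definition W :: "nat \<Rightarrow> nat \<Rightarrow> (nat \<Rightarrow> nat) \<Rightarrow> nat" where
  "W K j cs = card {i \<in> {..<K}. cs i = j}"

definition W_pmf :: "nat pmf \<Rightarrow> real \<Rightarrow> nat \<Rightarrow> nat \<Rightarrow> nat pmf" where
  "W_pmf v p K j = bind_pmf (sizes_pmf v K) (\<lambda>vs. map_pmf (W K j) (counts_pmf p K vs))"

definition Q :: "nat pmf \<Rightarrow> real \<Rightarrow> nat \<Rightarrow> real" where
  "Q v p j = measure_pmf.expectation v (\<lambda>x. (p * real x) ^ j / fact j * exp (- p * real x))"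

end

theory Submission
  imports Defs
begin


definition ss :: "real \<Rightarrow> nat \<Rightarrow> real" where "ss l i = l ^ i / fact i"
definition SS :: "real \<Rightarrow> nat \<Rightarrow> real" where "SS l m = (\<Sum>i<Suc m. ss l i)"

lemma ss_Suc: "ss l (Suc m) = ss l m * l / Suc m"
  by (simp add: ss_def field_simps)

lemma ss_0[simp]: "ss l 0 = 1" by (simp add: ss_def)

lemma ss_pos: "l > 0 \<Longrightarrow> ss l i > 0" by (simp add: ss_def)

lemma SS_Suc: "SS l (Suc m) = SS l m + ss l (Suc m)" by (simp add: SS_def)

lemma SS_0[simp]: "SS l 0 = 1" by (simp add: SS_def)

lemma SS_ge1: "l > 0 \<Longrightarrow> 1 \<le> SS l m"
proof (induction m)
  case (Suc m) then show ?case using ss_pos[of l "Suc m"] by (simp add: SS_Suc)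
qed simp

lemma ss_sums: "ss l sums exp l"
proof -
  have "ss l = (\<lambda>n. l ^ n /\<^sub>R fact n)" by (rule ext) (simp add: ss_def field_simps)
  then show ?thesis using exp_converges[of l] by simp
qed

lemma tail_sums: "(\<lambda>r. ss l (r + Suc m)) sums (exp l - SS l m)"
  unfolding SS_def by (rule sums_iff_shift'[THEN iffD2]) (rule ss_sums)

lemma SS_le: "l > 0 \<Longrightarrow> SS l m \<le> exp l"
proof -
  assume l: "l > 0"
  have "0 \<le> exp l - SS l m"
    by (rule sums_le[OF _ sums_zero tail_sums]) (use ss_pos[OF l] in \<open>auto intro: less_imp_le\<close>)
  then show ?thesis by simp
qed

lemma Gdec: assumes l: "l > 0"
  shows "(exp l - SS l (Suc m)) / ss l (Suc m) \<le> (exp l - SS l m) / ss l m"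
proof -
  have s1: "(\<lambda>r. ss l (r + Suc (Suc m)) / ss l (Suc m)) sums ((exp l - SS l (Suc m)) / ss l (Suc m))"
    by (rule sums_divide[OF tail_sums])
  have s2: "(\<lambda>r. ss l (r + Suc m) / ss l m) sums ((exp l - SS l m) / ss l m)"
    by (rule sums_divide[OF tail_sums])
  have h: "\<forall>r. ss l (r + Suc (Suc m)) / ss l (Suc m) \<le> ss l (r + Suc m) / ss l m"
  proof
    fix r
    define a where "a = r + Suc m"
    have ra: "r + Suc (Suc m) = Suc a" by (simp add: a_def)
    have alg: "(A * l / x) / (B * l / y) = (A / B) * (y / x)" if "B > 0" "x > 0" "y > 0" for A B x y :: real
      using that l by (simp add: field_simps)
    have e0: "ss l (Suc a) / ss l (Suc m) = (ss l a / ss l m) * (Suc m / Suc a)"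
      unfolding ss_Suc[of l a] ss_Suc[of l m] by (rule alg) (use ss_pos[OF l, of m] in auto)
    have e: "ss l (r + Suc (Suc m)) / ss l (Suc m) = (ss l (r + Suc m) / ss l m) * (Suc m / Suc (r + Suc m))"
      using e0 unfolding ra a_def .
    have "Suc m / Suc (r + Suc m) \<le> (1::real)" by simp
    moreover have "ss l (r + Suc m) / ss l m \<ge> 0" using ss_pos[OF l] by (simp add: less_imp_le)
    ultimately show "ss l (r + Suc (Suc m)) / ss l (Suc m) \<le> ss l (r + Suc m) / ss l m" unfolding e by (rule mult_left_le)
  qed
  show ?thesis by (rule sums_le[OF h[rule_format] s1 s2])
qed

lemma Gdec_mono: assumes l: "l > 0" and "j \<le> m"
  shows "(exp l - SS l m) / ss l m \<le> (exp l - SS l j) / ss l j"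
  using assms(2)
proof (induction m rule: dec_induct)
  case (step m) then show ?case using Gdec[OF l, of m] by linarith
qed simp

lemma L_Suc: assumes l: "l > 0"
  shows "SS l (Suc m) / ss l (Suc m) = 1 + Suc m / l * (SS l m / ss l m)"
proof -
  have p: "ss l m * l > 0" using ss_pos[OF l, of m] l by simp
  have q: "ss l (Suc m) > 0" using ss_pos[OF l] by blast
  have "SS l (Suc m) / ss l (Suc m) = SS l m / ss l (Suc m) + 1"
    unfolding SS_Suc using q by (simp add: add_divide_distrib)
  also have "SS l m / ss l (Suc m) = Suc m / l * (SS l m / ss l m)"
  proof -
    have alg: "X / (B * l / y) = y / l * (X / B)" if "B > 0" "y > 0" for X B y :: real
      using that l by (simp add: field_simps)
    show ?thesis unfolding ss_Suc[of l m] by (rule alg) (use ss_pos[OF l, of m] in auto)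
  qed
  finally show ?thesis by simp
qed

lemma L_nonneg: "l > 0 \<Longrightarrow> 0 \<le> SS l m / ss l m"
  using SS_ge1[of l m] ss_pos[of l m] by simp

lemma L_mono_Suc: assumes l: "l > 0"
  shows "SS l m / ss l m \<le> SS l (Suc m) / ss l (Suc m)"
proof (induction m)
  case 0 then show ?case using L_Suc[OF l, of 0] l by simp
next
  case (Suc m)
  have alg: "z - x = (1/l) * x + (b / l) * (x - y)"
    if "z = 1 + (b+1)/l * x" "x = 1 + b/l*y" for x y z b :: real
    using that l by (simp add: field_simps)
  have "SS l (Suc (Suc m)) / ss l (Suc (Suc m)) - SS l (Suc m) / ss l (Suc m)
     = (1/l) * (SS l (Suc m) / ss l (Suc m)) + (Suc m / l) * (SS l (Suc m) / ss l (Suc m) - SS l m / ss l m)"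
    apply (rule alg) using L_Suc[OF l, of "Suc m"] L_Suc[OF l, of m] by simp_all
  moreover have "0 \<le> (1/l) * (SS l (Suc m) / ss l (Suc m))"
    by (intro mult_nonneg_nonneg L_nonneg[OF l]) (use l in simp)
  moreover have "0 \<le> (Suc m / l) * (SS l (Suc m) / ss l (Suc m) - SS l m / ss l m)"
    using Suc l by simp
  ultimately show ?case by linarith
qed

lemma L_mono: assumes l: "l > 0" and "k \<le> m"
  shows "SS l k / ss l k \<le> SS l m / ss l m"
  using assms(2)
proof (induction m rule: dec_induct)
  case (step m) then show ?case using L_mono_Suc[OF l, of m] by linarith
qed simp

lemma key_ineq: assumes l: "l > 0"
  shows "l / Suc t * SS l t \<le> SS l (Suc t) - 1"
proof -
  have "l / Suc t * SS l t = (\<Sum>i<Suc t. ss l i * l / Suc t)"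
    unfolding SS_def sum_distrib_left by (rule sum.cong) auto
  also have "\<dots> \<le> (\<Sum>i<Suc t. ss l i * l / Suc i)"
  proof (rule sum_mono)
    fix i assume "i \<in> {..<Suc t}"
    then have "real (Suc i) \<le> real (Suc t)" by simp
    moreover have "0 \<le> ss l i * l" using ss_pos[OF l, of i] l by simp
    ultimately show "ss l i * l / Suc t \<le> ss l i * l / Suc i"
      by (intro divide_left_mono) auto
  qed
  also have "\<dots> = (\<Sum>i<Suc t. ss l (Suc i))" by (simp add: ss_Suc)
  also have "\<dots> = SS l (Suc t) - 1"
    unfolding SS_def by (subst sum.lessThan_Suc_shift[of _ "Suc t"]) simp
  finally show ?thesis .
qed



definition sf :: "real \<Rightarrow> nat \<Rightarrow> nat \<Rightarrow> real" where
  "sf l j k = (case k of 0 \<Rightarrow> 0 | Suc m \<Rightarrow>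
      ss l j * (of_bool (j \<le> m) * exp l - SS l m) / (l * ss l m * exp l))"

lemma stein_eq: assumes l: "l > 0"
  shows "l * sf l j (Suc k) - real k * sf l j k = of_bool (k = j) - ss l j / exp l"
proof (cases k)
  case 0
  have E: "exp l > 0" by simp
  show ?thesis
  proof (cases "j = 0")
    case True then show ?thesis using 0 l E by (simp add: sf_def field_simps)
  next
    case False then show ?thesis using 0 l E by (simp add: sf_def field_simps)
  qed
next
  case (Suc m)
  have B: "ss l m > 0" and C: "ss l (Suc m) > 0" using ss_pos[OF l] by auto
  have key: "real (Suc m) = l * ss l m / ss l (Suc m)"
    unfolding ss_Suc[of l m] using B l by (simp add: field_simps)
  define a1 where "a1 = (of_bool (j \<le> Suc m) :: real)"
  define a0 where "a0 = (of_bool (j \<le> m) :: real)"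
  have alg: "l * (A * (a1 * E - (S + Cc)) / (l * Cc * E)) - M * (A * (a0 * E - S) / (l * Bb * E))
      = (a1 - a0) * A / Cc - A / E"
    if "M = l * Bb / Cc" "Cc > 0" "Bb > 0" "E > 0" for A S Cc Bb E M :: real
    unfolding that(1) using that(2-4) l by (simp add: field_simps)
  have "l * sf l j (Suc k) - real k * sf l j k = (a1 - a0) * ss l j / ss l (Suc m) - ss l j / exp l"
    unfolding Suc sf_def a1_def[symmetric] a0_def[symmetric] nat.case SS_Suc
    by (rule alg) (use key B C in auto)
  moreover have "(a1 - a0) * ss l j / ss l (Suc m) = of_bool (k = j)"
    using C by (auto simp: a1_def a0_def Suc)
  ultimately show ?thesis by simp
qed

lemma sf_lt: assumes l: "l > 0" and "m < j"
  shows "sf l j (Suc m) = - (ss l j * (SS l m / ss l m)) / (l * exp l)"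
  using assms ss_pos[OF l, of m] by (simp add: sf_def)

lemma sf_ge: assumes l: "l > 0" and "j \<le> m"
  shows "sf l j (Suc m) = ss l j * ((exp l - SS l m) / ss l m) / (l * exp l)"
  using assms ss_pos[OF l, of m] by (simp add: sf_def)

lemma bnd_lt: assumes l: "l > 0" and "m < j"
  shows "ss l j * (SS l m / ss l m) \<le> exp l - 1"
proof -
  obtain t where j: "j = Suc t" using assms(2) by (cases j) auto
  have "m \<le> t" using assms(2) j by simp
  then have "SS l m / ss l m \<le> SS l t / ss l t" by (rule L_mono[OF l])
  then have "ss l j * (SS l m / ss l m) \<le> ss l j * (SS l t / ss l t)"
    by (rule mult_left_mono) (use ss_pos[OF l, of j] in simp)
  also have "ss l j * (SS l t / ss l t) = l / Suc t * SS l t"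
    unfolding j ss_Suc[of l t] using ss_pos[OF l, of t] by (simp add: field_simps)
  also have "\<dots> \<le> SS l (Suc t) - 1" by (rule key_ineq[OF l])
  also have "\<dots> \<le> exp l - 1" using SS_le[OF l] by simp
  finally show ?thesis .
qed

lemma bnd_ge: assumes l: "l > 0" and "j \<le> m"
  shows "ss l j * ((exp l - SS l m) / ss l m) \<le> exp l - 1"
proof -
  have "ss l j * ((exp l - SS l m) / ss l m) \<le> ss l j * ((exp l - SS l j) / ss l j)"
    by (rule mult_left_mono[OF Gdec_mono[OF l assms(2)]]) (use ss_pos[OF l, of j] in simp)
  also have "\<dots> = exp l - SS l j" using ss_pos[OF l, of j] by simp
  also have "\<dots> \<le> exp l - 1" using SS_ge1[OF l] by simp
  finally show ?thesis .
qed

lemma sf_range_lt: assumes l: "l > 0" and "m < j"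
  shows "- ((exp l - 1) / (l * exp l)) \<le> sf l j (Suc m) \<and> sf l j (Suc m) \<le> 0"
proof -
  have X: "0 \<le> ss l j * (SS l m / ss l m)"
    by (rule mult_nonneg_nonneg) (use ss_pos[OF l, of j] L_nonneg[OF l, of m] in auto)
  have D: "l * exp l > 0" using l by simp
  have a: "ss l j * (SS l m / ss l m) / (l * exp l) \<le> (exp l - 1) / (l * exp l)"
    by (rule divide_right_mono[OF bnd_lt[OF assms]]) (use D in simp)
  have b: "0 \<le> ss l j * (SS l m / ss l m) / (l * exp l)" by (rule divide_nonneg_pos[OF X D])
  show ?thesis unfolding sf_lt[OF assms] minus_divide_left[symmetric] using a b by linarith
qed

lemma sf_range_ge: assumes l: "l > 0" and "j \<le> m"
  shows "0 \<le> sf l j (Suc m) \<and> sf l j (Suc m) \<le> (exp l - 1) / (l * exp l)"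
proof -
  have X: "0 \<le> ss l j * ((exp l - SS l m) / ss l m)"
    by (rule mult_nonneg_nonneg) (use ss_pos[OF l, of j] ss_pos[OF l, of m] SS_le[OF l, of m] in auto)
  have D: "l * exp l > 0" using l by simp
  have a: "ss l j * ((exp l - SS l m) / ss l m) / (l * exp l) \<le> (exp l - 1) / (l * exp l)"
    by (rule divide_right_mono[OF bnd_ge[OF assms]]) (use D in simp)
  have b: "0 \<le> ss l j * ((exp l - SS l m) / ss l m) / (l * exp l)" by (rule divide_nonneg_pos[OF X D])
  show ?thesis unfolding sf_ge[OF assms] using a b by linarith
qed

lemma sf_jump: assumes l: "l > 0"
  shows "sf l (Suc t) (Suc (Suc t)) - sf l (Suc t) (Suc t) \<le> (exp l - 1) / (l * exp l)"
proof -
  have D: "l * exp l > 0" using l by simp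
  have e: "sf l (Suc t) (Suc (Suc t)) - sf l (Suc t) (Suc t)
     = ((exp l - SS l (Suc t)) + ss l (Suc t) * (SS l t / ss l t)) / (l * exp l)"
  proof -
    have alg: "A * ((E - S1) / A) / LE - (- (A * (S0 / B)) / LE) = ((E - S1) + A * (S0 / B)) / LE"
      if "A > 0" "B > 0" "LE > 0" for A E S1 S0 B LE :: real
      using that by (simp add: field_simps)
    show ?thesis unfolding sf_ge[OF l order.refl] sf_lt[OF l lessI]
      by (rule alg) (use ss_pos[OF l, of "Suc t"] ss_pos[OF l, of t] D in auto)
  qed
  have "ss l (Suc t) * (SS l t / ss l t) = l / Suc t * SS l t"
    unfolding ss_Suc[of l t] using ss_pos[OF l, of t] by (simp add: field_simps)
  also have "\<dots> \<le> SS l (Suc t) - 1" by (rule key_ineq[OF l])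
  finally have "(exp l - SS l (Suc t)) + ss l (Suc t) * (SS l t / ss l t) \<le> exp l - 1" by simp
  then show ?thesis unfolding e by (rule divide_right_mono) (use D in simp)
qed

lemma sf_bound: assumes l: "l > 0" and k: "k \<ge> 1"
  shows "\<bar>sf l j (Suc k) - sf l j k\<bar> \<le> (exp l - 1) / (l * exp l)"
proof -
  obtain m where km: "k = Suc m" using k by (cases k) auto
  show ?thesis
  proof (cases "Suc m < j")
    case True
    then show ?thesis using sf_range_lt[OF l True] sf_range_lt[OF l, of m j] unfolding km by auto
  next
    case False
    show ?thesis
    proof (cases "j \<le> m")
      case True
      then show ?thesis using sf_range_ge[OF l True] sf_range_ge[OF l, of j "Suc m"] unfolding km by auto
    next
      case False
      with \<open>\<not> Suc m < j\<close> have j: "j = Suc m" by simp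
      have "0 \<le> sf l j (Suc (Suc m))" using sf_range_ge[OF l, of j "Suc m"] j by simp
      moreover have "sf l j (Suc m) \<le> 0" using sf_range_lt[OF l, of m j] j by simp
      ultimately show ?thesis using sf_jump[OF l, of m] unfolding km j by auto
    qed
  qed
qed



primrec bn :: "real \<Rightarrow> nat \<Rightarrow> nat pmf" where
  "bn q 0 = return_pmf 0"
| "bn q (Suc n) = bind_pmf (bernoulli_pmf q) (\<lambda>b. map_pmf (\<lambda>k. k + of_bool b) (bn q n))"

declare bn.simps(2)[simp del]

lemma set_bn: "set_pmf (bn q n) \<subseteq> {..n}"
  by (induction n) (auto split: if_splits simp: bn.simps)

lemma finite_bn: "finite (set_pmf (bn q n))"
  using set_bn finite_subset by blast

lemma integrable_bn[simp]: "integrable (measure_pmf (bn q n)) (f :: nat \<Rightarrow> real)"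
  by (rule integrable_measure_pmf_finite[OF finite_bn])

lemma E_bn_Suc: assumes q: "0 \<le> q" "q \<le> 1"
  shows "measure_pmf.expectation (bn q (Suc n)) (g :: nat \<Rightarrow> real)
     = q * measure_pmf.expectation (bn q n) (\<lambda>k. g (Suc k))
       + (1 - q) * measure_pmf.expectation (bn q n) g"
proof -
  have "measure_pmf.expectation (bn q (Suc n)) g
      = (\<Sum>b\<in>UNIV. pmf (bernoulli_pmf q) b *\<^sub>R
           measure_pmf.expectation (map_pmf (\<lambda>k. k + of_bool b) (bn q n)) g)"
    unfolding bn.simps by (rule pmf_expectation_bind) (auto simp: finite_bn)
  also have "\<dots> = q * measure_pmf.expectation (bn q n) (\<lambda>k. g (Suc k))
       + (1 - q) * measure_pmf.expectation (bn q n) g"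
    using q by (simp add: UNIV_bool)
  finally show ?thesis .
qed

lemma stein_id: assumes q: "0 \<le> q" "q \<le> 1"
  shows "measure_pmf.expectation (bn q (Suc n)) (\<lambda>k. real k * g k)
       = real (Suc n) * q * measure_pmf.expectation (bn q n) (\<lambda>k. g (Suc k))"
proof (induction n arbitrary: g)
  case 0
  show ?case unfolding E_bn_Suc[OF q] by simp
next
  case (Suc n)
  define E where "E = (\<lambda>h. measure_pmf.expectation (bn q n) (h :: nat \<Rightarrow> real))"
  define E1 where "E1 = (\<lambda>h. measure_pmf.expectation (bn q (Suc n)) (h :: nat \<Rightarrow> real))"
  have a: "E1 (\<lambda>k. real (Suc k) * g (Suc k)) = E1 (\<lambda>k. real k * g (Suc k)) + E1 (\<lambda>k. g (Suc k))"
    unfolding E1_def by (simp add: algebra_simps integral_add)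
  have b: "E1 (\<lambda>k. real k * g (Suc k)) = real (Suc n) * q * E (\<lambda>k. g (Suc (Suc k)))"
    unfolding E1_def E_def using Suc[of "\<lambda>k. g (Suc k)"] .
  have c: "E1 (\<lambda>k. real k * g k) = real (Suc n) * q * E (\<lambda>k. g (Suc k))"
    unfolding E1_def E_def using Suc[of g] .
  have d: "E1 (\<lambda>k. g (Suc k)) = q * E (\<lambda>k. g (Suc (Suc k))) + (1 - q) * E (\<lambda>k. g (Suc k))"
    unfolding E1_def E_def by (rule E_bn_Suc[OF q])
  have "measure_pmf.expectation (bn q (Suc (Suc n))) (\<lambda>k. real k * g k)
      = q * E1 (\<lambda>k. real (Suc k) * g (Suc k)) + (1 - q) * E1 (\<lambda>k. real k * g k)"
    unfolding E1_def by (rule E_bn_Suc[OF q])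
  also have "\<dots> = real (Suc (Suc n)) * q * E1 (\<lambda>k. g (Suc k))"
    unfolding a b c d by (simp add: algebra_simps)
  finally show ?case unfolding E1_def .
qed

lemma pmf_bn_expect: "pmf (bn q n) j = measure_pmf.expectation (bn q n) (\<lambda>k. of_bool (k = j) :: real)"
proof -
  have "measure_pmf.expectation (bn q n) (\<lambda>k. of_bool (k = j) :: real)
      = measure_pmf.expectation (bn q n) (indicator {j})"
    by (rule Bochner_Integration.integral_cong) (auto simp: indicator_def)
  also have "\<dots> = pmf (bn q n) j" by (simp add: measure_pmf_single)
  finally show ?thesis by simp
qed

lemma main_bin: assumes q: "0 < q" "q \<le> 1"
  shows "\<bar>pmf (bn q (Suc n)) j - ss (real (Suc n) * q) j / exp (real (Suc n) * q)\<bar>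
        \<le> (1 - exp (- (real (Suc n) * q))) * q"
proof -
  define l where "l = real (Suc n) * q"
  have l: "l > 0" using q by (simp add: l_def)
  define c where "c = (exp l - 1) / (l * exp l)"
  define E where "E = (\<lambda>h. measure_pmf.expectation (bn q n) (h :: nat \<Rightarrow> real))"
  define EN where "EN = (\<lambda>h. measure_pmf.expectation (bn q (Suc n)) (h :: nat \<Rightarrow> real))"
  have q': "0 \<le> q" "q \<le> 1" using q by auto
  have "pmf (bn q (Suc n)) j = EN (\<lambda>k. l * sf l j (Suc k) - real k * sf l j k + ss l j / exp l)"
    unfolding pmf_bn_expect EN_def stein_eq[OF l] by simp
  also have "\<dots> = l * EN (\<lambda>k. sf l j (Suc k)) - EN (\<lambda>k. real k * sf l j k) + ss l j / exp l"
    unfolding EN_def by (simp add: integral_add integral_diff)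
  also have "EN (\<lambda>k. real k * sf l j k) = l * E (\<lambda>k. sf l j (Suc k))"
    unfolding EN_def E_def stein_id[OF q'] l_def by simp
  also have "EN (\<lambda>k. sf l j (Suc k)) = q * E (\<lambda>k. sf l j (Suc (Suc k))) + (1 - q) * E (\<lambda>k. sf l j (Suc k))"
    unfolding EN_def E_def by (rule E_bn_Suc[OF q'])
  finally have eq: "pmf (bn q (Suc n)) j - ss l j / exp l
      = l * q * E (\<lambda>k. sf l j (Suc (Suc k)) - sf l j (Suc k))"
    unfolding E_def by (simp add: algebra_simps)
  have bnd: "\<bar>E (\<lambda>k. sf l j (Suc (Suc k)) - sf l j (Suc k))\<bar> \<le> c"
  proof -
    have "\<bar>E (\<lambda>k. sf l j (Suc (Suc k)) - sf l j (Suc k))\<bar>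
        \<le> E (\<lambda>k. \<bar>sf l j (Suc (Suc k)) - sf l j (Suc k)\<bar>)"
      unfolding E_def using integral_norm_bound[of "measure_pmf (bn q n)" "\<lambda>k. sf l j (Suc (Suc k)) - sf l j (Suc k)"]
      by (simp del: integral_diff)
    also have "\<dots> \<le> c"
      unfolding E_def c_def
      by (rule measure_pmf.integral_le_const) (auto intro!: sf_bound[OF l])
    finally show ?thesis .
  qed
  have "\<bar>pmf (bn q (Suc n)) j - ss l j / exp l\<bar> = l * q * \<bar>E (\<lambda>k. sf l j (Suc (Suc k)) - sf l j (Suc k))\<bar>"
    unfolding eq using l q by (simp add: abs_mult)
  also have "\<dots> \<le> l * q * c" using bnd l q by (simp add: mult_left_mono)
  also have "l * q * c = (1 - exp (- l)) * q"
    unfolding c_def using l by (simp add: field_simps exp_minus)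
  finally show ?thesis unfolding l_def .
qed



lemma map_eq_bernoulli: "map_pmf (\<lambda>x. x = i) c = bernoulli_pmf (pmf c i)"
proof (rule pmf_eqI)
  fix b :: bool
  have q: "0 \<le> pmf c i" "pmf c i \<le> 1" by (auto simp: pmf_le_1)
  show "pmf (map_pmf (\<lambda>x. x = i) c) b = pmf (bernoulli_pmf (pmf c i)) b"
  proof (cases b)
    case True
    have "{x. x = i} = {i}" by auto
    then show ?thesis using True q by (simp add: pmf_map vimage_def measure_pmf_single)
  next
    case False
    have "measure_pmf.prob c {x. x \<noteq> i} = 1 - measure_pmf.prob c {i}"
    proof -
      have "{x. x \<noteq> i} = UNIV - {i}" by auto
      then show ?thesis using measure_pmf.prob_compl[of "{i}" c] by simp
    qed
    then show ?thesis using False q by (simp add: pmf_map vimage_def measure_pmf_single)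
  qed
qed

lemma count_replicate: "map_pmf (\<lambda>xs. count_list xs i) (replicate_pmf n c) = bn (pmf c i) n"
proof (induction n)
  case 0 then show ?case by simp
next
  case (Suc n)
  have "map_pmf (\<lambda>xs. count_list xs i) (replicate_pmf (Suc n) c)
      = c \<bind> (\<lambda>x. map_pmf (\<lambda>k. k + of_bool (x = i)) (map_pmf (\<lambda>xs. count_list xs i) (replicate_pmf n c)))"
    apply (simp add: map_bind_pmf map_pmf_def[symmetric] pmf.map_comp o_def)
    apply (rule bind_pmf_cong[OF refl])
    apply (rule map_pmf_cong[OF refl])
    by auto
  also have "\<dots> = bn (pmf c i) (Suc n)"
    unfolding Suc bn.simps map_eq_bernoulli[symmetric] bind_map_pmf by simp
  finally show ?case .
qed

lemma expectation_bind_fin: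
  fixes h :: "'b \<Rightarrow> real"
  assumes A: "finite A" and sub: "\<And>x. set_pmf (f x) \<subseteq> A"
  shows "measure_pmf.expectation (bind_pmf M f) h = measure_pmf.expectation M (\<lambda>x. measure_pmf.expectation (f x) h)"
proof -
  have "measure_pmf.expectation (bind_pmf M f) h = (\<Sum>a\<in>A. pmf (bind_pmf M f) a *\<^sub>R h a)"
    by (rule integral_measure_pmf[OF A]) (use sub in auto)
  also have "\<dots> = (\<Sum>a\<in>A. measure_pmf.expectation M (\<lambda>x. pmf (f x) a * h a))"
    by (simp add: pmf_bind)
  also have "\<dots> = measure_pmf.expectation M (\<lambda>x. \<Sum>a\<in>A. pmf (f x) a * h a)"
  proof -
    have int: "integrable (measure_pmf M) (\<lambda>x. pmf (f x) a * h a)" for a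
      by (rule measure_pmf.integrable_const_bound[where B = "\<bar>h a\<bar>"])
         (auto simp: abs_mult pmf_le_1 intro!: mult_left_le_one_le)
    show ?thesis by (rule Bochner_Integration.integral_sum[symmetric]) (rule int)
  qed
  also have "\<dots> = measure_pmf.expectation M (\<lambda>x. measure_pmf.expectation (f x) h)"
  proof (rule Bochner_Integration.integral_cong[OF refl])
    fix x
    show "(\<Sum>a\<in>A. pmf (f x) a * h a) = measure_pmf.expectation (f x) h"
      by (subst integral_measure_pmf[OF A]) (use sub in auto)
  qed
  finally show ?thesis .
qed

lemma card_filter_sum: assumes "finite A" shows "real (card {i \<in> A. P i}) = (\<Sum>i\<in>A. of_bool (P i))"
proof -
  have "(\<Sum>i\<in>A. of_bool (P i) :: real) = (\<Sum>i\<in>{i \<in> A. P i}. 1)"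
    using assms by (simp add: sum.inter_filter[symmetric] of_bool_def)
  then show ?thesis by simp
qed

lemma integrable_bounded_AE:
  fixes f :: "'a \<Rightarrow> real"
  assumes "\<And>x. x \<in> set_pmf M \<Longrightarrow> \<bar>f x\<bar> \<le> B"
  shows "integrable (measure_pmf M) f"
  by (rule measure_pmf.integrable_const_bound[where B = B]) (use assms in \<open>auto simp: AE_measure_pmf_iff\<close>)



lemma pmf_as_expect: "pmf M j = measure_pmf.expectation M (\<lambda>k. of_bool (k = j) :: real)"
proof -
  have "measure_pmf.expectation M (\<lambda>k. of_bool (k = j) :: real)
      = measure_pmf.expectation M (indicator {j})"
    by (rule Bochner_Integration.integral_cong) (auto simp: indicator_def)
  also have "\<dots> = pmf M j" by (simp add: measure_pmf_single)
  finally show ?thesis by simp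
qed

lemma sizes_props:
  assumes "vs \<in> set_pmf (sizes_pmf v K)"
  shows "\<And>i. i < K \<Longrightarrow> vs i \<in> set_pmf v" "\<And>i. \<not> i < K \<Longrightarrow> vs i = 0"
  using assms by (auto simp: sizes_pmf_def set_Pi_pmf PiE_dflt_def)

lemma pmf_colour:
  assumes pos: "\<And>i. i < K \<Longrightarrow> vs i > 0" and K: "K \<ge> 1" and i: "i < K"
  shows "pmf (colour_pmf K vs) i = real (vs i) / real (total K vs)"
proof -
  define M where "M = (\<Sum>i<K. replicate_mset (vs i) i)"
  have size: "size M = total K vs" by (simp add: M_def size_multiset_sum total_def)
  have "vs 0 > 0" using pos K by simp
  moreover have "vs 0 \<le> total K vs" unfolding total_def
    by (rule member_le_sum) (use K in auto)
  ultimately have "total K vs > 0" by simp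
  then have ne: "M \<noteq> {#}" using size by auto
  have cnt: "count M i = vs i"
  proof -
    have "count M i = (\<Sum>a<K. if a = i then vs a else 0)"
      by (simp add: M_def count_sum)
    also have "\<dots> = vs i" using i by (simp add: sum.delta')
    finally show ?thesis .
  qed
  show ?thesis unfolding colour_pmf_def M_def[symmetric]
    using pmf_of_multiset[OF ne] cnt size by simp
qed

lemma set_W: "set_pmf (map_pmf (W K j) M) \<subseteq> {..K}"
proof
  fix w assume "w \<in> set_pmf (map_pmf (W K j) M)"
  then obtain cs where "w = W K j cs" by auto
  moreover have "card {i \<in> {..<K}. cs i = j} \<le> card {..<K}"
    by (rule card_mono) auto
  ultimately show "w \<in> {..K}" by (simp add: W_def)
qed

lemma E_counts_W:
  assumes pos: "\<And>i. i < K \<Longrightarrow> vs i > 0" and K: "K \<ge> 1"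
  shows "measure_pmf.expectation (map_pmf (W K j) (counts_pmf p K vs)) real
       = (\<Sum>i<K. pmf (bn (real (vs i) / real (total K vs)) (nat \<lfloor>p * real (total K vs)\<rfloor>)) j)"
proof -
  define n where "n = nat \<lfloor>p * real (total K vs)\<rfloor>"
  define C where "C = counts_pmf p K vs"
  have "measure_pmf.expectation (map_pmf (W K j) C) real
      = measure_pmf.expectation C (\<lambda>cs. \<Sum>i<K. of_bool (cs i = j))"
  proof -
    have e: "real (W K j cs) = (\<Sum>i<K. of_bool (cs i = j))" for cs
      unfolding W_def by (rule card_filter_sum) simp
    show ?thesis by (simp only: integral_map_pmf e)
  qed
  also have "\<dots> = (\<Sum>i<K. measure_pmf.expectation C (\<lambda>cs. of_bool (cs i = j)))"
  proof (rule Bochner_Integration.integral_sum)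
    fix i show "integrable (measure_pmf C) (\<lambda>cs. of_bool (cs i = j) :: real)"
      by (rule integrable_bounded_AE[where B = 1]) simp
  qed
  also have "\<dots> = (\<Sum>i<K. pmf (bn (real (vs i) / real (total K vs)) n) j)"
  proof (rule sum.cong[OF refl])
    fix i assume i: "i \<in> {..<K}"
    have "measure_pmf.expectation C (\<lambda>cs. of_bool (cs i = j) :: real)
        = measure_pmf.expectation (map_pmf (\<lambda>cs. cs i) C) (\<lambda>k. of_bool (k = j))"
      by simp
    also have "map_pmf (\<lambda>cs. cs i) C = bn (pmf (colour_pmf K vs) i) n"
      unfolding C_def counts_pmf_def n_def pmf.map_comp o_def count_replicate ..
    also have "pmf (colour_pmf K vs) i = real (vs i) / real (total K vs)"
      using pmf_colour[OF pos K] i by simp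
    finally show "measure_pmf.expectation C (\<lambda>cs. of_bool (cs i = j) :: real)
        = pmf (bn (real (vs i) / real (total K vs)) n) j"
      by (simp add: pmf_as_expect)
  qed
  finally show ?thesis unfolding C_def n_def .
qed



lemma symmetry:
  fixes F :: "nat \<Rightarrow> nat \<Rightarrow> real"
  assumes i: "i < K"
  shows "measure_pmf.expectation (sizes_pmf v K) (\<lambda>vs. F (vs i) (total K vs))
       = measure_pmf.expectation (sizes_pmf v K) (\<lambda>vs. F (vs 0) (total K vs))"
proof -
  define \<tau> where "\<tau> = (\<lambda>x::nat. if x = 0 then i else if x = i then 0 else x)"
  have bij: "bij_betw \<tau> {..<K} {..<K}"
    by (rule bij_betw_byWitness[where f' = \<tau>]) (use i in \<open>auto simp: \<tau>_def\<close>)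
  have out: "\<tau> x \<notin> {..<K}" if "x \<notin> {..<K}" for x
    using that i by (auto simp: \<tau>_def)
  have S: "sizes_pmf v K = map_pmf (\<lambda>g. g \<circ> \<tau>) (sizes_pmf v K)"
    unfolding sizes_pmf_def by (rule Pi_pmf_bij_betw[OF finite_lessThan bij out])
  have "measure_pmf.expectation (sizes_pmf v K) (\<lambda>vs. F (vs 0) (total K vs))
      = measure_pmf.expectation (map_pmf (\<lambda>g. g \<circ> \<tau>) (sizes_pmf v K)) (\<lambda>vs. F (vs 0) (total K vs))"
    by (subst S[symmetric]) (rule refl)
  also have "\<dots> = measure_pmf.expectation (sizes_pmf v K) (\<lambda>g. F (g (\<tau> 0)) (total K (g \<circ> \<tau>)))"
    by simp
  also have "\<dots> = measure_pmf.expectation (sizes_pmf v K) (\<lambda>vs. F (vs i) (total K vs))"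
  proof (rule Bochner_Integration.integral_cong[OF refl])
    fix g :: "nat \<Rightarrow> nat"
    have "total K (g \<circ> \<tau>) = total K g"
      unfolding total_def o_def by (rule sum.reindex_bij_betw[OF bij])
    moreover have "\<tau> 0 = i" by (simp add: \<tau>_def)
    ultimately show "F (g (\<tau> 0)) (total K (g \<circ> \<tau>)) = F (g i) (total K g)" by simp
  qed
  finally show ?thesis by simp
qed

lemma ss_le_exp: "l > 0 \<Longrightarrow> ss l j \<le> exp l"
proof -
  assume l: "l > 0"
  have "ss l j \<le> SS l j" unfolding SS_def
    by (rule member_le_sum) (use ss_pos[OF l] in \<open>auto intro: less_imp_le\<close>)
  then show ?thesis using SS_le[OF l, of j] by simp
qed

theorem mainTheorem2:
  fixes v :: "nat pmf" and K :: nat and p :: real and j :: nat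
  assumes pos: "\<forall>x \<in> set_pmf v. x > 0"
    and K: "K \<ge> 1"
    and p: "0 < p" "p < 1"
    and integral: "\<forall>vs \<in> set_pmf (sizes_pmf v K). p * real (total K vs) \<in> \<int>"
  shows "\<bar>measure_pmf.expectation (W_pmf v p K j) real / real K - Q v p j\<bar>
           \<le> measure_pmf.expectation (sizes_pmf v K)
                (\<lambda>vs. min (p * real (vs 0)) 1 * (real (vs 0) / real (total K vs)))"
proof -
  define S where "S = sizes_pmf v K"
  define T where "T = total K"
  define P where "P = (\<lambda>i vs. pmf (bn (real (vs i) / real (T vs)) (nat \<lfloor>p * real (T vs)\<rfloor>)) j)"
  define pi where "pi = (\<lambda>i (vs::nat\<Rightarrow>nat). (p * real (vs i)) ^ j / fact j * exp (- p * real (vs i)))"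
  define h where "h = (\<lambda>i (vs::nat\<Rightarrow>nat). min (p * real (vs i)) 1 * (real (vs i) / real (T vs)))"
  have Kpos: "real K > 0" using K by simp
  have supp: "vs i > 0" if "vs \<in> set_pmf S" "i < K" for vs i
    using sizes_props(1)[of vs v K i] that pos by (auto simp: S_def)
  have le_T: "vs i \<le> T vs" if "i < K" for vs i
    unfolding T_def total_def by (rule member_le_sum) (use that in auto)
  have Tpos: "T vs > 0" if "vs \<in> set_pmf S" for vs
    using supp[OF that, of 0] le_T[of 0 vs] K by simp
  have Nval: "real (nat \<lfloor>p * real (T vs)\<rfloor>) = p * real (T vs)" if "vs \<in> set_pmf S" for vs
  proof -
    from integral that obtain z where z: "p * real (T vs) = of_int z"
      unfolding S_def T_def by (auto elim!: Ints_cases)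
    have "p * real (T vs) \<ge> 0" using p by simp
    then have "z \<ge> 0" using z by simp
    then show ?thesis using z by simp
  qed

  have E1: "measure_pmf.expectation (W_pmf v p K j) real = measure_pmf.expectation S (\<lambda>vs. \<Sum>i<K. P i vs)"
  proof -
    have "measure_pmf.expectation (W_pmf v p K j) real
        = measure_pmf.expectation S (\<lambda>vs. measure_pmf.expectation (map_pmf (W K j) (counts_pmf p K vs)) real)"
      unfolding W_pmf_def S_def by (rule expectation_bind_fin[OF finite_atMost set_W])
    also have "\<dots> = measure_pmf.expectation S (\<lambda>vs. \<Sum>i<K. P i vs)"
    proof -
      have e: "measure_pmf.expectation (map_pmf (W K j) (counts_pmf p K vs)) real = (\<Sum>i<K. P i vs)"
        if "vs \<in> set_pmf S" for vs
        unfolding P_def T_def by (rule E_counts_W[OF _ K]) (rule supp[OF that])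
      show ?thesis
        apply (rule integral_cong_AE)
          apply simp
         apply simp
        apply (rule AE_pmfI)
        apply (rule e)
        by assumption
    qed
    finally show ?thesis .
  qed

  have E2: "measure_pmf.expectation S (pi i) = Q v p j" if i: "i < K" for i
  proof -
    have m: "map_pmf (\<lambda>vs. vs i) S = v"
      unfolding S_def sizes_pmf_def using Pi_pmf_component[of "{..<K}" i 0 "\<lambda>_. v"] i by simp
    have "measure_pmf.expectation S (pi i)
        = measure_pmf.expectation (map_pmf (\<lambda>vs. vs i) S) (\<lambda>x. (p * real x) ^ j / fact j * exp (- p * real x))"
      by (simp add: pi_def)
    then show ?thesis unfolding m Q_def .
  qed

  have B: "\<bar>P i vs - pi i vs\<bar> \<le> h i vs" if vs: "vs \<in> set_pmf S" and i: "i < K" for vs i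
  proof -
    define n where "n = nat \<lfloor>p * real (T vs)\<rfloor>"
    define q where "q = real (vs i) / real (T vs)"
    have rn: "real n = p * real (T vs)" unfolding n_def by (rule Nval[OF vs])
    have "real n > 0" unfolding rn using p Tpos[OF vs] by simp
    then obtain n' where n': "n = Suc n'" by (cases n) auto
    have q: "0 < q" "q \<le> 1" using supp[OF vs i] le_T[OF i, of vs] Tpos[OF vs] by (auto simp: q_def)
    have lq: "real (Suc n') * q = p * real (vs i)"
      using rn Tpos[OF vs] unfolding n'[symmetric] q_def by simp
    note mb = main_bin[OF q, of n' j]
    have Pe: "P i vs = pmf (bn q (Suc n')) j" unfolding P_def q_def n'[symmetric] n_def ..
    have pie: "pi i vs = ss (p * real (vs i)) j / exp (p * real (vs i))"
      by (simp add: pi_def ss_def exp_minus divide_inverse)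
    have "\<bar>P i vs - pi i vs\<bar> \<le> (1 - exp (- (p * real (vs i)))) * q"
      using mb unfolding Pe pie lq .
    also have "\<dots> \<le> min (p * real (vs i)) 1 * q"
    proof (rule mult_right_mono)
      show "0 \<le> q" using q by simp
      have "1 + (- (p * real (vs i))) \<le> exp (- (p * real (vs i)))" by (rule exp_ge_add_one_self)
      moreover have "exp (- (p * real (vs i))) > 0" by simp
      ultimately show "1 - exp (- (p * real (vs i))) \<le> min (p * real (vs i)) 1" by simp
    qed
    finally show ?thesis unfolding h_def q_def .
  qed

  have intP: "integrable (measure_pmf S) (P i)" for i
    by (rule integrable_bounded_AE[where B = 1]) (simp add: P_def pmf_le_1)
  have intpi: "integrable (measure_pmf S) (pi i)" if i: "i < K" for i
  proof (rule integrable_bounded_AE[where B = 1])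
    fix vs assume vs: "vs \<in> set_pmf S"
    define l where "l = p * real (vs i)"
    have l: "l > 0" using p supp[OF vs i] by (simp add: l_def)
    have "pi i vs = ss l j / exp l"
      by (simp add: pi_def ss_def exp_minus divide_inverse l_def)
    moreover have "0 \<le> ss l j" using ss_pos[OF l] less_imp_le by blast
    moreover have "ss l j \<le> exp l" by (rule ss_le_exp[OF l])
    ultimately show "\<bar>pi i vs\<bar> \<le> 1" by simp
  qed
  have inth: "integrable (measure_pmf S) (h i)" if i: "i < K" for i
  proof (rule integrable_bounded_AE[where B = 1])
    fix vs assume vs: "vs \<in> set_pmf S"
    have a: "0 \<le> min (p * real (vs i)) 1" "min (p * real (vs i)) 1 \<le> 1" using p by auto
    have b: "0 \<le> real (vs i) / real (T vs)" "real (vs i) / real (T vs) \<le> 1"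
      using le_T[OF i, of vs] Tpos[OF vs] by auto
    have "0 \<le> h i vs" unfolding h_def using a b by simp
    moreover have "h i vs \<le> 1" unfolding h_def using mult_le_one[OF a(2) b(1) b(2)] .
    ultimately show "\<bar>h i vs\<bar> \<le> 1" by simp
  qed

  define D where "D = (\<lambda>i. measure_pmf.expectation S (\<lambda>vs. P i vs - pi i vs))"
  have ED: "\<bar>D i\<bar> \<le> measure_pmf.expectation S (h 0)" if i: "i < K" for i
  proof -
    have "\<bar>D i\<bar> \<le> measure_pmf.expectation S (\<lambda>vs. \<bar>P i vs - pi i vs\<bar>)"
      unfolding D_def using integral_norm_bound[of "measure_pmf S" "\<lambda>vs. P i vs - pi i vs"] by simp
    also have "\<dots> \<le> measure_pmf.expectation S (h i)"
      by (rule integral_mono_AE)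
         (auto intro!: AE_pmfI B i integrable_abs Bochner_Integration.integrable_diff intP intpi inth)
    also have "\<dots> = measure_pmf.expectation S (h 0)"
      unfolding h_def S_def T_def
      by (rule symmetry[OF i, of v "\<lambda>a b. min (p * real a) 1 * (real a / real b)"])
    finally show ?thesis .
  qed
  have sumE: "measure_pmf.expectation (W_pmf v p K j) real / real K - Q v p j = (\<Sum>i<K. D i) / real K"
  proof -
    have "measure_pmf.expectation (W_pmf v p K j) real = (\<Sum>i<K. measure_pmf.expectation S (P i))"
      unfolding E1 by (rule Bochner_Integration.integral_sum) (rule intP)
    moreover have "(\<Sum>i<K. D i) = (\<Sum>i<K. measure_pmf.expectation S (P i) - Q v p j)"
      by (rule sum.cong[OF refl]) (simp add: D_def Bochner_Integration.integral_diff intP intpi E2)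
    moreover have "(\<Sum>i<K. measure_pmf.expectation S (P i) - Q v p j)
        = (\<Sum>i<K. measure_pmf.expectation S (P i)) - real K * Q v p j"
      by (simp add: sum_subtractf)
    ultimately show ?thesis using Kpos by (simp add: field_simps)
  qed
  have "\<bar>(\<Sum>i<K. D i) / real K\<bar> \<le> (\<Sum>i<K. \<bar>D i\<bar>) / real K"
    using Kpos by (simp add: sum_abs divide_right_mono)
  also have "\<dots> \<le> (\<Sum>i<K. measure_pmf.expectation S (h 0)) / real K"
    by (rule divide_right_mono[OF sum_mono]) (use ED Kpos in auto)
  also have "\<dots> = measure_pmf.expectation S (h 0)" using Kpos by simp
  finally show ?thesis unfolding sumE h_def S_def T_def by simp
qed


end
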